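(* Let $\nu\in\mathbb{N}$, let $(X,d)$ be a $\nu$-generalized metric space, let $T:X\to X$, and let $m:X\times X\to[0,\infty)$. Suppose that for some $x\in X$ the following hold: (i) for every $\epsilon>0$ there exist $\delta>0$ and $N\in\mathbb{Z}^+$ such that for all $p,q\ge N$, $m(T^px,T^qx)<\delta+\epsilon$ implies $d(T^{p+1}x,T^{q+1}x)\le\epsilon$; (ii) for any two subsequences $\{T^{p_i}x\}$ and $\{T^{q_i}x\}$ of $\{T^nx\}$, $\limsup_{i\to\infty} m(T^{p_i}x,T^{q_i}x)\le\limsup_{i\to\infty} d(T^{p_i}x,T^{q_i}x)$; (iii) $d(T^nx,T^{n+1}x)+d(T^nx,T^{n+2}x)\to0$ as $n\to\infty$. Then $\{T^nx\}$ is a Cauchy sequence.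
   Context: Let $X$ be a nonempty set, $d:X\times X\to[0,\infty)$, and $\nu\in\mathbb{N}$. $(X,d)$ is a $\nu$-generalized metric space if: (1) $d(x,y)=0$ iff $x=y$; (2) $d(x,y)=d(y,x)$ for all $x,y$; (3) $d(x,y)\le d(x,u_1)+d(u_1,u_2)+\dots+d(u_\nu,y)$ for every set $\{x,u_1,\dots,u_\nu,y\}$ of $\nu+2$ pairwise distinct elements of $X$. A sequence $\{x_n\}$ in $X$ is Cauchy if $\lim_{n\to\infty}\sup\{d(x_n,x_{n+1+m}): m\in\mathbb{Z}^+\}=0$, where $\mathbb{Z}^+$ denotes the nonnegative integers. A subsequence $\{x_{p_i}\}$ means $p_1<p_2<\cdots$. $T^n$ denotes the $n$-th iterate of $T$. *)

theory Defs
  imports "HOL-Analysis.Analysis"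
begin

fun pathlen :: "('a \<Rightarrow> 'a \<Rightarrow> real) \<Rightarrow> 'a list \<Rightarrow> real" where
  "pathlen d (a # b # rest) = d a b + pathlen d (b # rest)"
| "pathlen d _ = 0"

definition nu_gen_metric :: "nat \<Rightarrow> 'a set \<Rightarrow> ('a \<Rightarrow> 'a \<Rightarrow> real) \<Rightarrow> bool" where
  "nu_gen_metric \<nu> X d \<longleftrightarrow>
     X \<noteq> {} \<and>
     (\<forall>x\<in>X. \<forall>y\<in>X. 0 \<le> d x y) \<and>
     (\<forall>x\<in>X. \<forall>y\<in>X. d x y = 0 \<longleftrightarrow> x = y) \<and>
     (\<forall>x\<in>X. \<forall>y\<in>X. d x y = d y x) \<and>
     (\<forall>x\<in>X. \<forall>y\<in>X. \<forall>u. set u \<subseteq> X \<and> length u = \<nu> \<and> distinct (x # u @ [y])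
          \<longrightarrow> d x y \<le> pathlen d (x # u @ [y]))"

definition gen_cauchy :: "('a \<Rightarrow> 'a \<Rightarrow> real) \<Rightarrow> (nat \<Rightarrow> 'a) \<Rightarrow> bool" where
  "gen_cauchy d s \<longleftrightarrow> ((\<lambda>n. SUP k. ereal (d (s n) (s (n + 1 + k)))) \<longlonglongrightarrow> 0)"

end

theory Submission imports Defs begin


definition short :: "nat \<Rightarrow> nat \<Rightarrow> bool" where
  "short a b \<longleftrightarrow> b = a+1 \<or> b = a+2 \<or> a = b+1 \<or> a = b+2"

lemma short_sym: "short a b = short b a" unfolding short_def by auto

fun S :: "nat \<Rightarrow> nat list" where
  "S 0 = [0]"
| "S (Suc L) = 0 # map Suc (rev (S L))"

lemma S_props: "set (S L) = {0..L} \<and> distinct (S L) \<and> length (S L) = L+1 \<and> S L \<noteq> [] \<and>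
   hd (S L) = 0 \<and> last (S L) = (if L = 0 then 0 else 1) \<and> successively short (S L)"
proof (induction L)
  case 0 then show ?case by simp
next
  case (Suc L)
  have st: "successively short (map Suc (rev (S L)))"
    using Suc by (simp add: successively_map short_def successively_mono) (smt (verit, best) successively_mono)
  have hd: "hd (map Suc (rev (S L))) = Suc (last (S L))" using Suc by (simp add: hd_map hd_rev)
  have "set (S (Suc L)) = {0..Suc L}"
  proof -
    have "set (S (Suc L)) = insert 0 (Suc ` {0..L})" using Suc by simp
    also have "\<dots> = {0..Suc L}" by (auto simp: image_iff)
    finally show ?thesis .
  qed
  moreover have "successively short (S (Suc L))"
    using st hd Suc by (auto simp: successively_Cons short_def split: if_splits)
  moreover have "distinct (S (Suc L))" using Suc by (auto simp: distinct_map)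
  moreover have "last (S (Suc L)) = 1" using Suc by (simp add: last_map last_rev)
  ultimately show ?case using Suc by simp
qed

lemma succ_upt: "successively short [a..<b]"
proof (induction b)
  case (Suc b) then show ?case by (auto simp: successively_append_iff short_def)
qed simp

definition F :: "nat \<Rightarrow> nat \<Rightarrow> nat list" where
  "F s M = [0..<s] @ map (\<lambda>i. i+s) (rev (S (M-s)))"

lemma F_props:
  assumes "1 \<le> s" "s \<le> M"
  shows "distinct (F s M) \<and> length (F s M) = M+1 \<and> hd (F s M) = 0 \<and> last (F s M) = s
     \<and> successively short (F s M)"
proof -
  have P: "set (S (M-s)) = {0..M-s} \<and> distinct (S (M-s)) \<and> length (S (M-s)) = M-s+1 \<and> S (M-s) \<noteq> [] \<and>
   hd (S (M-s)) = 0 \<and> last (S (M-s)) = (if M-s = 0 then 0 else 1) \<and> successively short (S (M-s))"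
    by (rule S_props)
  have d: "distinct (F s M)" using P by (auto simp: F_def distinct_map inj_on_def)
  have l: "length (F s M) = M+1" using P assms by (simp add: F_def)
  have h: "hd (F s M) = 0" using assms by (simp add: F_def hd_append)
  have la: "last (F s M) = s" using P by (simp add: F_def last_map last_rev)
  have s1: "successively short (map (\<lambda>i. i+s) (rev (S (M-s))))"
    using P by (simp add: successively_map short_def) (smt (verit, best) successively_mono)
  have s0: "successively short [0..<s]"
    by (rule succ_upt)
  have "successively short (F s M)" unfolding F_def successively_append_iff
    using s0 s1 P assms by (auto simp: hd_map hd_rev short_def)
  then show ?thesis using d l h la by simp
qed

lemma pathlen_append: "pathlen d (xs @ z # ys) = pathlen d (xs @ [z]) + pathlen d (z # ys)"
proof (induction xs rule: induct_list012)
  case (3 a b r) then show ?case by simp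
qed simp_all

lemma tri:
  assumes gm: "nu_gen_metric \<nu> X d" and l: "length L = \<nu>+2" and dis: "distinct L" and sX: "set L \<subseteq> X"
  shows "d (hd L) (last L) \<le> pathlen d L"
proof -
  obtain a r where L: "L = a # r" using l by (cases L) auto
  have r: "r \<noteq> []" using l L by auto
  have r2: "r = butlast r @ [last r]" using r by simp
  have LL: "L = a # butlast r @ [last r]" using L r2 by simp
  have H: "\<forall>x\<in>X. \<forall>y\<in>X. \<forall>u. set u \<subseteq> X \<and> length u = \<nu> \<and> distinct (x # u @ [y]) \<longrightarrow> d x y \<le> pathlen d (x # u @ [y])"
    using gm unfolding nu_gen_metric_def by blast
  have aX: "a \<in> X" using sX L by simp
  have lX: "last r \<in> X" using sX L r by auto
  have bX: "set (butlast r) \<subseteq> X" using sX L by (meson in_set_butlastD set_subset_Cons subset_code(1) subset_trans)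
  have lb: "length (butlast r) = \<nu>" using l L by simp
  have ds: "distinct (a # butlast r @ [last r])" using dis LL by simp
  have "d a (last r) \<le> pathlen d (a # butlast r @ [last r])"
    using H aX lX bX lb ds by blast
  then show ?thesis using L r by (simp add: LL)
qed

lemma short_bound:
  assumes b: "\<forall>i\<ge>nb. d (y i) (y (Suc i)) \<le> c \<and> d (y i) (y (i+2)) \<le> c"
    and sym: "\<forall>i j. d (y i) (y j) = d (y j) (y i)"
  shows "successively short L \<Longrightarrow> (\<forall>i\<in>set L. nb \<le> i) \<Longrightarrow> pathlen d (map y L) \<le> real (length L - 1) * c"
proof (induction L rule: induct_list012)
  case (3 a b' r)
  have "d (y a) (y b') \<le> c"
  proof -
    have "short a b'" using "3.prems" by simp
    then consider "b' = Suc a" | "b' = a+2" | "a = Suc b'" | "a = b'+2" unfolding short_def by auto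
    then show ?thesis
    proof cases
      case 1 then show ?thesis using b "3.prems" by auto
    next
      case 2 then show ?thesis using b "3.prems" by auto
    next
      case 3 then show ?thesis using b sym "3.prems" by (metis list.set_intros(1,2))
    next
      case 4 then show ?thesis using b sym "3.prems" by (metis list.set_intros(1,2))
    qed
  qed
  moreover have "pathlen d (map y (b' # r)) \<le> real (length (b'#r) - 1) * c"
    using "3.IH"(2) "3.prems" by simp
  ultimately show ?case by (simp add: algebra_simps)
next
  case (2 a) then show ?case by simp
qed simp

lemma short_shift: "short (j+a) (j+b) = short a b" by (auto simp: short_def)


lemma cauchy_from:
  assumes nn: "\<forall>n k. 0 \<le> d (s n) (s k)"
    and e: "\<forall>e>0. \<exists>N. \<forall>n\<ge>N. \<forall>k. d (s n) (s (n+1+k)) \<le> e"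
  shows "gen_cauchy d s"
  unfolding gen_cauchy_def
proof (rule order_tendstoI)
  fix l :: ereal assume "l < 0"
  have "\<forall>n. l < (SUP k. ereal (d (s n) (s (n + 1 + k))))"
  proof
    fix n
    have "ereal (d (s n) (s (n + 1 + 0))) \<le> (SUP k. ereal (d (s n) (s (n + 1 + k))))"
      by (rule SUP_upper) simp
    moreover have "0 \<le> ereal (d (s n) (s (n + 1 + 0)))" using nn by simp
    ultimately show "l < (SUP k. ereal (d (s n) (s (n + 1 + k))))" using \<open>l < 0\<close> by order
  qed
  then show "\<forall>\<^sub>F n in sequentially. l < (SUP k. ereal (d (s n) (s (n + 1 + k))))" by simp
next
  fix u :: ereal assume "0 < u"
  then obtain r where r: "0 < ereal r" "ereal r < u" using ereal_dense2 by blast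
  then have "r > 0" by simp
  then obtain N where N: "\<forall>n\<ge>N. \<forall>k. d (s n) (s (n+1+k)) \<le> r" using e by blast
  have "\<forall>n\<ge>N. (SUP k. ereal (d (s n) (s (n + 1 + k)))) < u"
  proof (intro allI impI)
    fix n assume "n \<ge> N"
    then have "(SUP k. ereal (d (s n) (s (n + 1 + k)))) \<le> ereal r"
      using N by (intro SUP_least) simp
    then show "(SUP k. ereal (d (s n) (s (n + 1 + k)))) < u" using r by order
  qed
  then show "\<forall>\<^sub>F n in sequentially. (SUP k. ereal (d (s n) (s (n + 1 + k)))) < u"
    unfolding eventually_sequentially by blast
qed

lemma claimC:
  fixes y :: "nat \<Rightarrow> 'a"
  assumes ii: "\<forall>p q :: nat \<Rightarrow> nat. strict_mono p \<and> strict_mono q \<longrightarrow>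
              limsup (\<lambda>i. ereal (m (y (p i)) (y (q i))))
                \<le> limsup (\<lambda>i. ereal (d (y (p i)) (y (q i))))"
    and dnn: "\<forall>i j. 0 \<le> d (y i) (y j)" and eta: "\<eta> > 0"
  shows "\<exists>N. \<forall>p q. p\<ge>N \<and> q\<ge>N \<and> d (y p) (y q) \<le> B \<longrightarrow> m (y p) (y q) < d (y p) (y q) + \<eta>"
proof (rule ccontr)
  assume "\<not> ?thesis"
  then have "\<forall>N. \<exists>p q. p\<ge>N \<and> q\<ge>N \<and> d (y p) (y q) \<le> B \<and> m (y p) (y q) \<ge> d (y p) (y q) + \<eta>"
    by (auto simp: not_less)
  then obtain P Q where PQ: "\<forall>N. P N \<ge> N \<and> Q N \<ge> N \<and> d (y (P N)) (y (Q N)) \<le> B \<and>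
      m (y (P N)) (y (Q N)) \<ge> d (y (P N)) (y (Q N)) + \<eta>" by metis
  define h where "h = (\<lambda>v. max (P v) (Q v) + 1)"
  define g where "g = (\<lambda>n. (h ^^ n) 0)"
  have gS: "g (Suc n) = h (g n)" for n by (simp add: g_def)
  define pp where "pp = (\<lambda>n. P (g n))"
  define qq where "qq = (\<lambda>n. Q (g n))"
  have smp: "strict_mono pp" unfolding strict_mono_Suc_iff
  proof
    fix n have "pp (Suc n) \<ge> g (Suc n)" using PQ by (simp add: pp_def)
    then show "pp n < pp (Suc n)" by (simp add: gS h_def pp_def)
  qed
  have smq: "strict_mono qq" unfolding strict_mono_Suc_iff
  proof
    fix n have "qq (Suc n) \<ge> g (Suc n)" using PQ by (simp add: qq_def)
    then show "qq n < qq (Suc n)" by (simp add: gS h_def qq_def)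
  qed
  define D where "D = (\<lambda>i. ereal (d (y (pp i)) (y (qq i))))"
  define M where "M = (\<lambda>i. ereal (m (y (pp i)) (y (qq i))))"
  have le: "limsup M \<le> limsup D" using ii smp smq by (simp add: M_def D_def)
  have "limsup D \<le> limsup (\<lambda>i. ereal B)"
    by (rule Limsup_mono) (use PQ in \<open>simp add: D_def pp_def qq_def\<close>)
  then have DB: "limsup D \<le> ereal B" by (simp add: Limsup_const)
  have "limsup (\<lambda>i. ereal 0) \<le> limsup D"
    by (rule Limsup_mono) (use dnn in \<open>simp add: D_def\<close>)
  then have D0: "0 \<le> limsup D" by (simp add: Limsup_const zero_ereal_def)
  have "limsup (\<lambda>i. D i + ereal \<eta>) \<le> limsup M"
    by (rule Limsup_mono) (use PQ in \<open>simp add: D_def M_def pp_def qq_def\<close>)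
  moreover have "limsup (\<lambda>i. D i + ereal \<eta>) = limsup D + ereal \<eta>"
    by (rule Limsup_add_ereal_right) simp_all
  ultimately have "limsup D + ereal \<eta> \<le> limsup D" using le by order
  moreover obtain r where "limsup D = ereal r" using DB D0 by (cases "limsup D") auto
  ultimately show False using eta by simp
qed

theorem theorem3p3:
  fixes \<nu> :: nat and X :: "'a set" and d m :: "'a \<Rightarrow> 'a \<Rightarrow> real"
    and T :: "'a \<Rightarrow> 'a" and x :: 'a
  assumes nu: "\<nu> \<ge> 1"
    and gm: "nu_gen_metric \<nu> X d"
    and TX: "\<forall>y\<in>X. T y \<in> X"
    and m_nonneg: "\<forall>y\<in>X. \<forall>z\<in>X. 0 \<le> m y z"
    and xX: "x \<in> X"
    and i: "\<forall>\<epsilon>>0. \<exists>\<delta>>0. \<exists>N::nat. \<forall>p q. p \<ge> N \<and> q \<ge> N \<and>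
              m ((T ^^ p) x) ((T ^^ q) x) < \<delta> + \<epsilon> \<longrightarrow>
              d ((T ^^ (p + 1)) x) ((T ^^ (q + 1)) x) \<le> \<epsilon>"
    and ii: "\<forall>p q :: nat \<Rightarrow> nat. strict_mono p \<and> strict_mono q \<longrightarrow>
              limsup (\<lambda>i. ereal (m ((T ^^ p i) x) ((T ^^ q i) x)))
                \<le> limsup (\<lambda>i. ereal (d ((T ^^ p i) x) ((T ^^ q i) x)))"
    and iii: "(\<lambda>n. d ((T ^^ n) x) ((T ^^ (n + 1)) x) + d ((T ^^ n) x) ((T ^^ (n + 2)) x))
              \<longlonglongrightarrow> 0"
  shows "gen_cauchy d (\<lambda>n. (T ^^ n) x)"
  proof -
  define y where "y = (\<lambda>n. (T^^n) x)"
  have yX: "y n \<in> X" for n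
    by (induction n) (use xX TX in \<open>auto simp: y_def\<close>)
  have G1: "\<forall>x\<in>X. \<forall>y\<in>X. 0 \<le> d x y" and G2: "\<forall>x\<in>X. \<forall>y\<in>X. (d x y = 0) = (x = y)"
    and G3: "\<forall>x\<in>X. \<forall>y\<in>X. d x y = d y x" using gm unfolding nu_gen_metric_def by auto
  have dnn: "\<forall>i j. 0 \<le> d (y i) (y j)" using G1 yX by simp
  have dsym: "\<forall>i j. d (y i) (y j) = d (y j) (y i)" using G3 yX by simp
  have d0: "\<And>i j. d (y i) (y j) = 0 \<longleftrightarrow> y i = y j" using G2 yX by simp
  have iii': "(\<lambda>n. d (y n) (y (Suc n)) + d (y n) (y (n + 2))) \<longlonglongrightarrow> 0" using iii by (simp add: y_def)
  have a0: "(\<lambda>n. d (y n) (y (Suc n))) \<longlonglongrightarrow> 0"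
    by (rule tendsto_sandwich[OF _ _ tendsto_const iii']) (use dnn in auto)
  have b0: "(\<lambda>n. d (y n) (y (n+2))) \<longlonglongrightarrow> 0"
    by (rule tendsto_sandwich[OF _ _ tendsto_const iii']) (use dnn in auto)
  have "gen_cauchy d y"
  proof (cases "inj y")
    case False
    then obtain i j where ij: "i < j" "y i = y j"
      unfolding inj_def by (metis linorder_neqE_nat)
    define p where "p = j - i"
    have p0: "p > 0" using ij by (simp add: p_def)
    have yit: "y (i + t) = (T^^t) (y i)" for i t
      by (simp add: y_def) (metis add.commute comp_apply funpow_add)
    have per: "y (i + t) = y (j + t)" for t using ij by (metis yit)
    have per2: "y (i + r*p + t) = y (i + t)" for r t
    proof (induction r arbitrary: t)
      case (Suc r)
      have ipj: "i + p = j" using ij by (simp add: p_def)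
      have "i + Suc r * p + t = j + (r*p + t)" using ipj by simp
      then have "y (i + Suc r * p + t) = y (j + (r*p + t))" by (rule arg_cong)
      also have "\<dots> = y (i + (r*p+t))" using per by simp
      also have "\<dots> = y (i + t)" using Suc by (simp add: add.assoc)
      finally show ?case .
    qed simp
    have az: "d (y (i+t)) (y (Suc (i+t))) = 0" for t
    proof -
      define hh where "hh = (\<lambda>r. i + r*p + t)"
      have "strict_mono hh" unfolding strict_mono_Suc_iff hh_def using p0 by simp
      then have "(\<lambda>r. d (y (hh r)) (y (Suc (hh r)))) \<longlonglongrightarrow> 0"
        using LIMSEQ_subseq_LIMSEQ[OF a0] by (simp add: comp_def)
      moreover have "d (y (hh r)) (y (Suc (hh r))) = d (y (i+t)) (y (Suc (i+t)))" for r
        using per2[of r t] per2[of r "Suc t"] by (simp add: hh_def)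
      ultimately show ?thesis by (simp add: LIMSEQ_const_iff)
    qed
    have yc: "y (i+t) = y i" for t
    proof (induction t)
      case (Suc t)
      have "y (Suc (i+t)) = y (i+t)" using az[of t] d0 by metis
      then show ?case using Suc by simp
    qed simp
    have "\<forall>n\<ge>i. y n = y i" using yc le_Suc_ex by blast
    then have "\<forall>n\<ge>i. \<forall>k. d (y n) (y (n+1+k)) \<le> e" if "e > 0" for e
      using d0 that by (metis add.commute le_add2 order.strict_implies_order trans_le_add2)
    then show ?thesis using cauchy_from dnn by blast
  next
    case True
    note injy = True
    have i': "\<forall>\<epsilon>>0. \<exists>\<delta>>0. \<exists>N. \<forall>p q. p\<ge>N \<and> q\<ge>N \<and> m (y p) (y q) < \<delta>+\<epsilon> \<longrightarrow> d (y (Suc p)) (y (Suc q)) \<le> \<epsilon>"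
      using i by (simp add: y_def)
    have ii': "\<forall>p q :: nat \<Rightarrow> nat. strict_mono p \<and> strict_mono q \<longrightarrow>
              limsup (\<lambda>i. ereal (m (y (p i)) (y (q i))))
                \<le> limsup (\<lambda>i. ereal (d (y (p i)) (y (q i))))" using ii by (simp add: y_def)
    have Ap: "\<exists>\<gamma>>0. \<exists>N. \<forall>p q. p\<ge>N \<and> q\<ge>N \<and> d (y p) (y q) < \<epsilon>+\<gamma> \<longrightarrow> d (y (Suc p)) (y (Suc q)) \<le> \<epsilon>"
      if ep0: "\<epsilon> > 0" for \<epsilon>
    proof -
      obtain \<delta> N1 where \<delta>: "\<delta> > 0" and N1: "\<forall>p q. p \<ge> N1 \<and> q \<ge> N1 \<and>
              m (y p) (y q) < \<delta> + \<epsilon> \<longrightarrow> d (y (Suc p)) (y (Suc q)) \<le> \<epsilon>"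
        using i' ep0 by blast
      obtain N2 where N2: "\<forall>p q. p\<ge>N2 \<and> q\<ge>N2 \<and> d (y p) (y q) \<le> \<epsilon> + \<delta>/2 \<longrightarrow> m (y p) (y q) < d (y p) (y q) + \<delta>/2"
        using claimC[where y=y and m=m and d=d and \<eta>="\<delta>/2" and B="\<epsilon> + \<delta>/2"] ii' dnn \<delta> by auto
      show ?thesis
      proof (intro exI conjI allI impI)
        show "\<delta>/2 > 0" using \<delta> by simp
        fix p q assume H: "max N1 N2 \<le> p \<and> max N1 N2 \<le> q \<and> d (y p) (y q) < \<epsilon> + \<delta>/2"
        then have "m (y p) (y q) < d (y p) (y q) + \<delta>/2" using N2 by auto
        then have "m (y p) (y q) < \<delta> + \<epsilon>" using H by simp
        then show "d (y (Suc p)) (y (Suc q)) \<le> \<epsilon>" using N1 H by auto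
      qed
    qed
    have main: "\<exists>N. \<forall>j\<ge>N. \<forall>k\<ge>1. d (y j) (y (j+k)) < 2*\<epsilon>" if ep: "\<epsilon> > 0" for \<epsilon>
    proof -
      obtain \<gamma>0 N0 where g0: "\<gamma>0 > 0" and N0: "\<forall>p q. p\<ge>N0 \<and> q\<ge>N0 \<and> d (y p) (y q) < \<epsilon>+\<gamma>0 \<longrightarrow> d (y (Suc p)) (y (Suc q)) \<le> \<epsilon>"
        using Ap ep by blast
      define \<gamma> where "\<gamma> = min \<gamma>0 \<epsilon>"
      have g: "\<gamma> > 0" "\<gamma> \<le> \<epsilon>" using g0 ep by (auto simp: \<gamma>_def)
      have Ng: "\<forall>p q. p\<ge>N0 \<and> q\<ge>N0 \<and> d (y p) (y q) < \<epsilon>+\<gamma> \<longrightarrow> d (y (Suc p)) (y (Suc q)) \<le> \<epsilon>"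
        using N0 by (smt (verit) \<gamma>_def)
      define c where "c = \<gamma> / (\<nu>+1)"
      have c0: "c > 0" using g by (simp add: c_def)
      have cg: "(\<nu>+1) * c = \<gamma>" by (simp add: c_def)
      obtain N3a where N3a: "\<forall>n\<ge>N3a. d (y n) (y (Suc n)) < c"
        using order_tendstoD(2)[OF a0 c0] unfolding eventually_sequentially by blast
      obtain N3b where N3b: "\<forall>n\<ge>N3b. d (y n) (y (n+2)) < c"
        using order_tendstoD(2)[OF b0 c0] unfolding eventually_sequentially by blast
      define n0 where "n0 = max N0 (max N3a N3b)"
      have bnd: "\<forall>i\<ge>n0. d (y i) (y (Suc i)) \<le> c \<and> d (y i) (y (i+2)) \<le> c"
        using N3a N3b by (auto simp: n0_def less_imp_le)
      have claim: "\<forall>j\<ge>n0. 1 \<le> k \<longrightarrow> d (y j) (y (j+k)) < \<epsilon>+\<gamma>" for k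
      proof (induction k rule: less_induct)
        case (less k)
        show ?case
        proof (intro allI impI)
          fix j assume j: "n0 \<le> j" and k1: "1 \<le> k"
          show "d (y j) (y (j+k)) < \<epsilon>+\<gamma>"
          proof (cases "k \<le> \<nu>+1")
            case True
            define L where "L = map ((+) j) (F k (\<nu>+1))"
            have ijy: "inj (y \<circ> (+) j)" using injy unfolding inj_def by (metis add_left_imp_eq comp_apply)
            have FP: "distinct (F k (\<nu>+1)) \<and> length (F k (\<nu>+1)) = \<nu>+1+1 \<and> hd (F k (\<nu>+1)) = 0 \<and> last (F k (\<nu>+1)) = k
               \<and> successively short (F k (\<nu>+1))" using F_props[OF k1 True] .
            have ne: "F k (\<nu>+1) \<noteq> []" using FP by auto
            have "d (hd (map y L)) (last (map y L)) \<le> pathlen d (map y L)"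
              by (rule tri[OF gm]) (use FP True yX injy ijy in \<open>auto simp: L_def distinct_map intro: inj_on_subset\<close>)
            moreover have "hd (map y L) = y j" "last (map y L) = y (j+k)"
              using FP ne by (simp_all add: L_def hd_map last_map)
            moreover have "pathlen d (map y L) \<le> real (length L - 1) * c"
              by (rule short_bound[where y=y and d=d and nb=n0 and c=c, OF bnd dsym]) (use FP j in \<open>auto simp: L_def successively_map short_shift\<close>)
            moreover have "real (length L - 1) * c = \<gamma>" using FP cg by (simp add: L_def)
            ultimately show ?thesis using ep by simp
          next
            case False
            define L where "L = [j..<j+\<nu>] @ [j+\<nu>, j+k]"
            have dL: "distinct L" using False by (auto simp: L_def)
            have "d (hd (map y L)) (last (map y L)) \<le> pathlen d (map y L)"
            proof (rule tri[OF gm])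
              show "distinct (map y L)" using dL injy by (simp add: distinct_map inj_on_subset[OF injy])
              show "length (map y L) = \<nu> + 2" by (simp add: L_def)
              show "set (map y L) \<subseteq> X" using yX by auto
            qed
            moreover have "hd (map y L) = y j" "last (map y L) = y (j+k)"
              using nu by (simp_all add: L_def hd_map hd_append)
            moreover have "pathlen d (map y L) = pathlen d (map y [j..<Suc (j+\<nu>)]) + d (y (j+\<nu>)) (y (j+k))"
              using pathlen_append[of d "map y [j..<j+\<nu>]" "y (j+\<nu>)" "[y (j+k)]"] by (simp add: L_def)
            moreover have "pathlen d (map y [j..<Suc (j+\<nu>)]) \<le> real (length [j..<Suc (j+\<nu>)] - 1) * c"
              by (rule short_bound[where y=y and d=d and nb=n0 and c=c, OF bnd dsym]) (use j succ_upt[of j "Suc (j+\<nu>)"] in \<open>auto simp del: upt_Suc\<close>)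
            moreover have "d (y (j+\<nu>)) (y (j+k)) \<le> \<epsilon>"
            proof -
              have "d (y (j+\<nu>-1)) (y (j+\<nu>-1 + (k-\<nu>))) < \<epsilon>+\<gamma>"
              proof -
                have IH': "\<forall>j'\<ge>n0. 1 \<le> k-\<nu> \<longrightarrow> d (y j') (y (j'+(k-\<nu>))) < \<epsilon>+\<gamma>"
                  using less.IH[of "k-\<nu>"] nu False by simp
                have "n0 \<le> j+\<nu>-1" "1 \<le> k-\<nu>" using j nu False by auto
                then show ?thesis using IH' by blast
              qed
              moreover have "j+\<nu>-1 + (k-\<nu>) = j+k-1" using False nu by simp
              ultimately have lt: "d (y (j+\<nu>-1)) (y (j+k-1)) < \<epsilon>+\<gamma>" by simp
              have "N0 \<le> j+\<nu>-1" "N0 \<le> j+k-1" using j nu False by (auto simp: n0_def)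
              then have "d (y (Suc (j+\<nu>-1))) (y (Suc (j+k-1))) \<le> \<epsilon>"
                using Ng lt by blast
              moreover have "Suc (j+\<nu>-1) = j+\<nu>" "Suc (j+k-1) = j+k" using nu k1 by auto
              ultimately show ?thesis by simp
            qed
            moreover have "real \<nu> * c < \<gamma>" using cg c0 by (simp add: algebra_simps)
            ultimately show ?thesis by simp
          qed
        qed
      qed
      show ?thesis using claim g by (metis add_le_cancel_left mult_2 order_less_le_trans)
    qed
    have "\<forall>e>0. \<exists>N. \<forall>n\<ge>N. \<forall>k. d (y n) (y (n+1+k)) \<le> e"
    proof (intro allI impI)
      fix e :: real assume "e > 0"
      then obtain N where N: "\<forall>j\<ge>N. \<forall>k\<ge>1. d (y j) (y (j+k)) < 2*(e/2)" using main[of "e/2"] by auto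
      show "\<exists>N. \<forall>n\<ge>N. \<forall>k. d (y n) (y (n+1+k)) \<le> e"
      proof (rule exI[of _ N], intro allI impI)
        fix n k assume "N \<le> n"
        then have "d (y n) (y (n + (1+k))) < e" using N by (metis le_add1 mult_2 field_sum_of_halves)
        then show "d (y n) (y (n+1+k)) \<le> e" by (simp add: add.assoc)
      qed
    qed
    then show ?thesis using cauchy_from dnn by blast
  qed
  then show ?thesis by (simp add: y_def)
qed

end
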